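(* Assume that $G=\mathbb Z_3^2$ acts on $\mathbb P^2$ (over $\mathbb C$) in such a way that the action is free outside a finite set. Then one can choose generators $g_1,g_2$ of $G$ and homogeneous coordinates $(x_0,x_1,x_2)$ on $\mathbb P^2$ such that $$g_1\colon(x_0,x_1,x_2)\mapsto(x_0,\omega x_1,\omega^2x_2),\qquad g_2\colon(x_0,x_1,x_2)\mapsto(x_1,x_2,x_0),$$ where $\omega\ne1$ is a cube root of $1$.
   Context: The action is by automorphisms of $\mathbb P^2$; "free outside a finite set" means that the set of points with nontrivial stabilizer is finite. *)

theory Defs
  imports "HOL-Analysis.Analysis" "HOL-Library.Numeral_Type"
begin

text \<open>The group G = Z_3^2 is modelled as the additive group of the type 3^2
 (vectors of length 2 over the ring Z/3Z = type 3).
 Points of P^2(C) are modelled as punctured lines {c v | c \<noteq> 0} of nonzero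
 vectors v in C^3.  Automorphisms of P^2 are elements of PGL(3,C), i.e.
 invertible 3x3 complex matrices taken up to a nonzero scalar.\<close>

definition proj_pt :: "complex^3 \<Rightarrow> (complex^3) set" where
  "proj_pt v = {c *s v | c. c \<noteq> 0}"

definition proj_eq :: "complex^3^3 \<Rightarrow> complex^3^3 \<Rightarrow> bool" where
  "proj_eq M N \<longleftrightarrow> (\<exists>c::complex. c \<noteq> 0 \<and> M = (\<chi> i j. c * N $ i $ j))"

definition pgl_action :: "(3^2 \<Rightarrow> complex^3^3) \<Rightarrow> bool" where
  "pgl_action \<rho> \<longleftrightarrow> (\<forall>g. invertible (\<rho> g)) \<and> proj_eq (\<rho> 0) (mat 1) \<and>
     (\<forall>g h. proj_eq (\<rho> (g + h)) (\<rho> g ** \<rho> h))"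

definition fixes_pt :: "complex^3^3 \<Rightarrow> complex^3 \<Rightarrow> bool" where
  "fixes_pt M v \<longleftrightarrow> (\<exists>c::complex. M *v v = c *s v)"

definition nonfree_points :: "(3^2 \<Rightarrow> complex^3^3) \<Rightarrow> (complex^3) set set" where
  "nonfree_points \<rho> = {proj_pt v | v. v \<noteq> 0 \<and> (\<exists>g. g \<noteq> 0 \<and> fixes_pt (\<rho> g) v)}"

definition diag_omega :: "complex \<Rightarrow> complex^3^3" where
  "diag_omega \<omega> = (\<chi> i j. if i = j then (if i = 0 then 1 else if i = 1 then \<omega> else \<omega>^2) else 0)"

text \<open>Matrix of (x0,x1,x2) \<mapsto> (x1,x2,x0).\<close>
definition cyc_perm :: "complex^3^3" where
  "cyc_perm = (\<chi> i j. if j = i + 1 then 1 else 0)"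

end

theory Submission
  imports Defs
begin


lemma cube_root_ex: "\<exists>t::complex. t^3 = z"
proof (cases "z = 0")
  case True then show ?thesis by (intro exI[of _ 0]) simp
next
  case False
  have "exp (Ln z / 3) ^ 3 = exp (of_nat 3 * (Ln z / 3))"
    by (simp only: exp_of_nat_mult)
  also have "\<dots> = z" using False by simp
  finally show ?thesis by blast
qed

lemma ifm1[simp]: "(if P then c else 0) * (x::'a::comm_ring_1) = (if P then c * x else 0)" by simp
lemma ifm2[simp]: "(x::'a::comm_ring_1) * (if P then c else 0) = (if P then x * c else 0)" by simp

lemma smul_mat: "(\<chi> i j. c * N $ i $ j) = mat c ** (N::'a::comm_ring_1^'n^'m)"
  by (simp add: vec_eq_iff matrix_matrix_mult_def mat_def)

lemma mat_vec: "mat c *v v = c *s (v::'a::comm_ring_1^'n)"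
  by (simp add: vec_eq_iff matrix_vector_mult_def mat_def)

lemma mat_mul_vec: "(mat c ** N) *v v = c *s (N *v (v::'a::comm_ring_1^'n))"
  by (simp add: matrix_vector_mul_assoc[symmetric] mat_vec)

lemma mat_mat: "mat c ** mat d = (mat (c * d) :: 'a::comm_ring_1^'n^'n)"
  by (simp add: vec_eq_iff matrix_matrix_mult_def mat_def)

lemma mul_mat_comm: "N ** mat c = mat c ** (N::'a::comm_ring_1^'n^'n)"
  by (simp add: vec_eq_iff matrix_matrix_mult_def mat_def mult.commute)

lemma proj_eq_iff: "proj_eq M N \<longleftrightarrow> (\<exists>c. c \<noteq> 0 \<and> M = mat c ** N)"
  unfolding proj_eq_def smul_mat ..

lemma infinite_nonfree:
  assumes g: "g \<noteq> 0" and u: "\<rho> g *v u = \<mu> *s u" and w: "\<rho> g *v w = \<mu> *s w"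
    and ind: "\<forall>a b. a *s u + b *s w = 0 \<longrightarrow> a = 0 \<and> b = 0"
  shows "infinite (nonfree_points \<rho>)"
proof
  assume fin: "finite (nonfree_points \<rho>)"
  define f where "f t = proj_pt (u + t *s w)" for t
  have nz: "u + t *s w \<noteq> 0" for t
    using ind[rule_format, of 1 t] by auto
  have "range f \<subseteq> nonfree_points \<rho>"
  proof safe
    fix t
    have "fixes_pt (\<rho> g) (u + t *s w)"
      unfolding fixes_pt_def using u w
      by (intro exI[of _ \<mu>]) (simp add: matrix_vector_right_distrib vec.scale vec.scale_right_distrib vec.scale_left_commute)
    then show "f t \<in> nonfree_points \<rho>"
      unfolding nonfree_points_def f_def using nz g by blast
  qed
  moreover have "inj f"
  proof (rule injI)
    fix s t assume "f s = f t"
    then have "u + s *s w \<in> proj_pt (u + t *s w)"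
      unfolding f_def proj_pt_def by (metis (mono_tags, lifting) mem_Collect_eq one_neq_zero vec.scale_one)
    then obtain c where c: "u + s *s w = c *s (u + t *s w)" unfolding proj_pt_def by blast
    then have "(1 - c) *s u + (s - c * t) *s w = 0"
      by (simp add: algebra_simps vec.scale_right_distrib vec.scale_left_diff_distrib)
    then have "1 - c = 0 \<and> s - c * t = 0" using ind by blast
    then show "s = t" by simp
  qed
  ultimately have "infinite (nonfree_points \<rho>)"
    using infinite_UNIV_char_0 by (metis finite_imageD finite_subset)
  with fin show False by simp
qed



definition om :: complex where "om = Complex (-1/2) (sqrt 3 / 2)"

lemma om_props: "1 + om + om^2 = 0" "om^3 = 1" "om \<noteq> 1" "om^2 \<noteq> 1" "om \<noteq> 0"
proof -
  show h: "1 + om + om^2 = 0"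
    by (simp add: om_def complex_eq_iff power2_eq_square)
  have "om^3 - 1 = (om - 1) * (1 + om + om^2)" by (simp add: algebra_simps power2_eq_square power3_eq_cube)
  then show h3: "om^3 = 1" using h by simp
  show "om \<noteq> 1" by (simp add: om_def complex_eq_iff)
  show "om \<noteq> 0" by (simp add: om_def complex_eq_iff)
  show "om^2 \<noteq> 1"
  proof
    assume "om^2 = 1"
    then have "om^3 = om" by (simp add: power3_eq_cube power2_eq_square)
    with h3 \<open>om \<noteq> 1\<close> show False by simp
  qed
qed

lemma scal_id:
  fixes M :: "complex^3^3"
  assumes M3: "\<And>x. M *v (M *v (M *v x)) = \<alpha> *s x" and l: "l^3 = \<alpha>" "l \<noteq> 0"
    and S: "\<And>x. 3 *s (M *v (M *v x)) = M *v (M *v x) + l *s (M *v x) + l^2 *s x"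
  shows "M = mat l"
proof -
  have E: "M *v (M *v (M *v x)) + l *s (M *v (M *v x)) + l^2 *s (M *v x)
       = l *s (M *v (M *v x) + l *s (M *v x) + l^2 *s x)" for x
    using M3[of x] l by (simp add: vec_eq_iff algebra_simps power2_eq_square power3_eq_cube)
  have "M *v x = l *s x" for x
  proof -
    have "3 *s (M *v (M *v (M *v x))) = M *v (3 *s (M *v (M *v x)))"
      by (simp add: vec.scale)
    also have "\<dots> = l *s (3 *s (M *v (M *v x)))"
      unfolding S using E by (simp add: matrix_vector_right_distrib vec.scale)
    finally have "3 *s (\<alpha> *s x) = l *s (3 *s (M *v (M *v x)))" by (simp add: M3)
    then have A: "M *v (M *v x) = l^2 *s x"
      using l by (auto simp: vec_eq_iff field_simps power2_eq_square power3_eq_cube)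
    have "l^2 *s (M *v x) = l^2 *s (l *s x)"
      using M3[of x] unfolding A by (simp add: vec.scale l(1)[symmetric] power3_eq_cube power2_eq_square)
    then show ?thesis using l by (simp add: vec_eq_iff)
  qed
  then show ?thesis by (simp add: matrix_eq mat_vec)
qed

lemma eig2:
  fixes M :: "complex^3^3"
  assumes MM: "M ** M ** M = mat \<alpha>" and a: "\<alpha> \<noteq> 0"
  shows "(\<exists>l. M = mat l) \<or> (\<exists>v0 v1 l0 l1. v0 \<noteq> 0 \<and> v1 \<noteq> 0 \<and> l0 \<noteq> l1 \<and>
            M *v v0 = l0 *s v0 \<and> M *v v1 = l1 *s v1)"
proof -
  have M3: "M *v (M *v (M *v x)) = \<alpha> *s x" for x
    using arg_cong[OF MM, of "\<lambda>N. N *v x"] by (simp add: matrix_vector_mul_assoc[symmetric] mat_vec)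
  obtain t where t: "t^3 = \<alpha>" using cube_root_ex by blast
  then have t0: "t \<noteq> 0" using a by auto
  define p where "p l x = M *v (M *v x) + l *s (M *v x) + l^2 *s x" for l x
  have E: "l^3 = \<alpha> \<Longrightarrow> M *v p l x = l *s p l x" for l x
    using M3[of x] unfolding p_def
    by (simp add: matrix_vector_right_distrib vec.scale vec_eq_iff algebra_simps power2_eq_square power3_eq_cube)
  note om = om_props
  have S: "p t x + p (t * om) x + p (t * om\<^sup>2) x = 3 *s (M *v (M *v x))" for x
  proof -
    have h1: "t + t * om + t * om^2 = 0" using om(1) by (metis distrib_left mult_1_right mult_zero_right)
    have h2: "t^2 + (t * om)^2 + (t * om^2)^2 = 0"
    proof -
      have "(t * om^2)^2 = t^2 * om" using om(2) by (simp add: power_mult_distrib power2_eq_square power3_eq_cube algebra_simps)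
      then have "t^2 + (t * om)^2 + (t * om^2)^2 = t^2 * (1 + om + om^2)" by (simp add: power_mult_distrib algebra_simps)
      then show ?thesis using om(1) by simp
    qed
    show ?thesis unfolding p_def vec_eq_iff
    proof
      fix i
      show "(M *v (M *v x) + t *s (M *v x) + t\<^sup>2 *s x + (M *v (M *v x) + (t * om) *s (M *v x) + (t * om)\<^sup>2 *s x) +
          (M *v (M *v x) + (t * om\<^sup>2) *s (M *v x) + (t * om\<^sup>2)\<^sup>2 *s x)) $ i = (3 *s (M *v (M *v x))) $ i"
        using h1 h2 by simp algebra
    qed
  qed
  have cube: "(t * om)^3 = \<alpha>" "(t * om^2)^3 = \<alpha>"
  proof -
    have "om^6 = (om^3)^2" by (simp flip: power_mult)
    then have "om^6 = 1" using om(2) by simp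
    then show "(t * om)^3 = \<alpha>" "(t * om^2)^3 = \<alpha>"
      using t om(2) by (simp_all add: power_mult_distrib flip: power_mult)
  qed
  have SC: "M = mat l" if l: "l^3 = \<alpha>" and o1: "\<forall>x. p l1 x = 0" and o2: "\<forall>x. p l2 x = 0"
     and sum: "\<And>x. p l x + p l1 x + p l2 x = 3 *s (M *v (M *v x))" for l l1 l2
  proof (rule scal_id[OF M3 l])
    show "l \<noteq> 0" using l a by auto
    show "3 *s (M *v (M *v x)) = M *v (M *v x) + l *s (M *v x) + l^2 *s x" for x
      using sum[of x] o1 o2 unfolding p_def by simp
  qed
  have ne: "t \<noteq> t * om" "t \<noteq> t * om^2" "t * om \<noteq> t * om^2"
    using t0 om by (auto simp: power2_eq_square)
  show ?thesis
  proof (cases "(\<forall>x. p (t * om) x = 0) \<and> (\<forall>x. p (t * om\<^sup>2) x = 0)")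
    case True then show ?thesis using SC[OF t _ _ S] by blast
  next
    case F1: False
    show ?thesis
    proof (cases "(\<forall>x. p t x = 0) \<and> (\<forall>x. p (t * om\<^sup>2) x = 0)")
      case True then show ?thesis using SC[OF cube(1), of t "t * om^2"] S by (metis add.commute add.left_commute)
    next
      case F2: False
      show ?thesis
      proof (cases "(\<forall>x. p t x = 0) \<and> (\<forall>x. p (t * om) x = 0)")
        case True then show ?thesis using SC[OF cube(2), of t "t * om"] S by (metis add.commute add.left_commute)
      next
        case F3: False
        have ev: "M *v p l x = l *s p l x" if "l \<in> {t, t * om, t * om^2}" for l x
          using E that t cube by auto
        from F1 F2 F3 have "\<exists>l0 l1 x0 x1. l0 \<in> {t, t * om, t * om^2} \<and> l1 \<in> {t, t * om, t * om^2} \<and> l0 \<noteq> l1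
            \<and> p l0 x0 \<noteq> 0 \<and> p l1 x1 \<noteq> 0"
          using ne by blast
        then show ?thesis using ev by blast
      qed
    qed
  qed
qed



lemma indep2:
  fixes M :: "complex^3^3"
  assumes "M *v u = l *s u" "M *v w = m *s w" "u \<noteq> 0" "w \<noteq> 0" "l \<noteq> m"
  shows "\<forall>a b. a *s u + b *s w = 0 \<longrightarrow> a = 0 \<and> b = 0"
proof (intro allI impI)
  fix a b assume h: "a *s u + b *s w = 0"
  then have "M *v (a *s u + b *s w) = 0" by simp
  then have "(a * l) *s u + (b * m) *s w = 0" using assms(1,2)
    by (simp add: matrix_vector_right_distrib vec.scale vec.scale_left_commute mult.commute)
  moreover have "(a * l) *s u + (b * l) *s w = 0" using h
    by (metis mult.commute vec.scale_right_distrib vec.scale_scale vec.scale_zero_right)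
  moreover have "(b * (m - l)) *s w = ((a * l) *s u + (b * m) *s w) - ((a * l) *s u + (b * l) *s w)"
    by (simp add: vec_eq_iff algebra_simps)
  ultimately have "(b * (m - l)) *s w = 0" by simp
  then have "b = 0" using assms by simp
  then show "a = 0 \<and> b = 0" using h assms by simp
qed

lemma oned:
  assumes fin: "finite (nonfree_points \<rho>)" and g: "g \<noteq> 0"
    and v: "\<rho> g *v v = l *s v" "v \<noteq> 0" and w: "\<rho> g *v w = l *s w"
  shows "\<exists>c. w = c *s v"
proof (rule ccontr)
  assume n: "\<nexists>c. w = c *s v"
  have "\<forall>a b. a *s v + b *s w = 0 \<longrightarrow> a = 0 \<and> b = 0"
  proof (intro allI impI)
    fix a b assume h: "a *s v + b *s w = 0"
    show "a = 0 \<and> b = 0"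
    proof (cases "b = 0")
      case True then show ?thesis using h v by simp
    next
      case False
      have "w = (- a / b) *s v" using h False
        by (simp add: vec_eq_iff field_simps) (metis add.commute add_eq_0_iff mult.commute)
      with n show ?thesis by blast
    qed
  qed
  then show False using infinite_nonfree[of g \<rho> v l w] g v w fin by blast
qed

lemma ex_mat_vec: "\<exists>x. (M::'a::field^'n^'m) *v x \<noteq> 0" if "M \<noteq> 0"
  using that by (metis matrix_eq matrix_vector_mult_0 mat_0)



lemma inv_conj:
  fixes Q :: "complex^3^3"
  assumes "invertible Q" "A ** Q = Q ** D"
  shows "invertible (matrix_inv Q) \<and> matrix_inv Q ** A ** matrix_inv (matrix_inv Q) = D"
proof -
  define Qi where "Qi = matrix_inv Q"
  have q: "Q ** Qi = mat 1 \<and> Qi ** Q = mat 1"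
    using assms(1) unfolding Qi_def matrix_inv_def invertible_def by (rule someI_ex)
  then have iq: "invertible Qi" unfolding invertible_def by blast
  have qi: "Qi ** matrix_inv Qi = mat 1 \<and> matrix_inv Qi ** Qi = mat 1"
    using iq unfolding matrix_inv_def invertible_def by (rule someI_ex)
  have "matrix_inv Qi = Q"
    by (metis q qi matrix_mul_assoc matrix_mul_lid matrix_mul_rid)
  then show ?thesis using iq q assms(2) unfolding Qi_def[symmetric]
    by (metis matrix_mul_assoc matrix_mul_lid)
qed

lemma construct:
  fixes A B :: "complex^3^3"
  assumes AB: "\<And>x. A *v (B *v x) = c *s (B *v (A *v x))" and c: "c^3 = 1" "c \<noteq> 1"
    and B3: "\<And>x. B *v (B *v (B *v x)) = \<beta> *s x" and b: "\<beta> \<noteq> 0" and Binv: "invertible B"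
    and Av: "A *v v = l *s v" "v \<noteq> 0" "l \<noteq> 0"
  shows "\<exists>P. invertible P \<and> (\<exists>\<omega>. \<omega>^3 = 1 \<and> \<omega> \<noteq> 1 \<and>
           proj_eq (P ** A ** matrix_inv P) (diag_omega \<omega>) \<and> proj_eq (P ** B ** matrix_inv P) cyc_perm)"
proof -
  obtain s where s: "s^3 = \<beta>" using cube_root_ex by blast
  then have s0: "s \<noteq> 0" using b by auto
  have c0: "c \<noteq> 0" using c by auto
  have c2: "c^2 \<noteq> 1"
  proof
    assume "c^2 = 1" then have "c^3 = c" by (simp add: power3_eq_cube power2_eq_square)
    with c show False by simp
  qed
  have Binj: "B *v x = 0 \<Longrightarrow> x = 0" for x
    using inj_matrix_vector_mult[OF Binv] by (metis injD matrix_vector_mult_0_right)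
  define w1 where "w1 = B *v v"
  define w2 where "w2 = B *v w1"
  have w1: "w1 \<noteq> 0" using Binj Av unfolding w1_def by blast
  have w2: "w2 \<noteq> 0" using Binj w1 unfolding w2_def by blast
  have Aw1: "A *v w1 = (c * l) *s w1" unfolding w1_def using AB Av by (simp add: vec.scale)
  have Aw2: "A *v w2 = (c^2 * l) *s w2" unfolding w2_def using AB Aw1
    by (simp add: vec.scale power2_eq_square mult.assoc)
  have Bw2: "B *v w2 = \<beta> *s v" unfolding w2_def w1_def using B3 by simp
  define F :: "3 \<Rightarrow> complex^3" where
    "F j = (if j = 0 then v else if j = 1 then (1 / s^2) *s w2 else (1 / s) *s w1)" for j
  define Q :: "complex^3^3" where "Q = (\<chi> i j. F j $ i)"
  have Qcol: "(X ** Q) $ r $ j = (X *v F j) $ r" for X r j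
    by (simp add: Q_def matrix_matrix_mult_def matrix_vector_mult_def)
  have Qmul: "(Q ** N) $ r $ j = (\<Sum>i\<in>UNIV. N $ i $ j * F i $ r)" for N r j
    by (simp add: Q_def matrix_matrix_mult_def mult.commute)
  have Qv: "Q *v x = (\<Sum>i\<in>UNIV. x $ i *s F i)" for x
    by (simp add: Q_def matrix_vector_mult_def vec_eq_iff sum_component mult.commute)
  have F0: "F 0 = v" "F 3 = v" "F 1 = (1 / s^2) *s w2" "F 2 = (1 / s) *s w1"
    by (simp_all add: F_def)
  define dg where "dg j = diag_omega (c^2) $ j $ j" for j
  have FA: "A *v F j = (l * dg j) *s F j" for j
  proof -
    have "j = 1 \<or> j = 2 \<or> j = 3" using exhaust_3 by blast
    moreover have "c^2 * c^2 = c"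
      using c(1) by (simp add: power2_eq_square power3_eq_cube) (metis mult.assoc mult_1_right)
    ultimately show ?thesis
      using Av Aw1 Aw2 by (auto simp: F0 dg_def diag_omega_def vec.scale mult.commute power2_eq_square)
  qed
  have FB: "B *v F j = s *s F (j - 1)" for j
  proof -
    have "j = 1 \<or> j = 2 \<or> j = 3" using exhaust_3 by blast
    then show ?thesis
      using s s0 Bw2 w1_def[symmetric] w2_def[symmetric] by (auto simp: F0 vec.scale vec_eq_iff field_simps power3_eq_cube power2_eq_square)
  qed
  have AQ: "A ** Q = Q ** (mat l ** diag_omega (c^2))"
  proof -
    have "(A ** Q) $ r $ j = (Q ** (mat l ** diag_omega (c^2))) $ r $ j" for r j
    proof -
      have "(Q ** (mat l ** diag_omega (c^2))) $ r $ j
          = (\<Sum>i\<in>UNIV. (if i = j then l * dg j * F j $ r else 0))"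
        unfolding Qmul smul_mat[symmetric] by (intro sum.cong) (auto simp: diag_omega_def dg_def)
      also have "\<dots> = l * dg j * F j $ r" by simp
      finally show ?thesis unfolding Qcol FA by simp
    qed
    then show ?thesis by (simp add: vec_eq_iff)
  qed
  have BQ: "B ** Q = Q ** (mat s ** cyc_perm)"
  proof -
    have "(B ** Q) $ r $ j = (Q ** (mat s ** cyc_perm)) $ r $ j" for r j
    proof -
      have "(Q ** (mat s ** cyc_perm)) $ r $ j
          = (\<Sum>i\<in>UNIV. (if i = j - 1 then s * F (j - 1) $ r else 0))"
        unfolding Qmul smul_mat[symmetric] by (intro sum.cong) (auto simp: cyc_perm_def algebra_simps)
      also have "\<dots> = s * F (j - 1) $ r" by simp
      finally show ?thesis unfolding Qcol FB by simp
    qed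
    then show ?thesis by (simp add: vec_eq_iff)
  qed
  have Qinv: "invertible Q"
    unfolding invertible_left_inverse matrix_left_invertible_ker
  proof (intro allI impI)
    fix x assume "Q *v x = 0"
    then have y: "x $ 3 *s v + x $ 1 *s F 1 + x $ 2 *s F 2 = 0"
      unfolding Qv sum_3 F0 by (simp add: add_ac)
    have ev1: "A *v F 1 = (c^2 * l) *s F 1" and ev2: "A *v F 2 = (c * l) *s F 2"
      using FA[of 1] FA[of 2] c(1) by (simp_all add: dg_def power4_eq_xxxx power3_eq_cube diag_omega_def mult.commute)
    have nz: "F 1 \<noteq> 0" "F 2 \<noteq> 0" using w1 w2 s0 by (simp_all add: F0)
    have "A *v (x $ 3 *s v + x $ 1 *s F 1 + x $ 2 *s F 2) - l *s (x $ 3 *s v + x $ 1 *s F 1 + x $ 2 *s F 2)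
        = ((c^2 * l - l) * x $ 1) *s F 1 + ((c * l - l) * x $ 2) *s F 2"
      using ev1 ev2 Av by (simp add: matrix_vector_right_distrib vec.scale vec_eq_iff algebra_simps)
    then have "((c^2 * l - l) * x $ 1) *s F 1 + ((c * l - l) * x $ 2) *s F 2 = 0" using y by simp
    moreover have "c^2 * l \<noteq> c * l" using c0 c Av(3) by (simp add: power2_eq_square)
    ultimately have "(c^2 * l - l) * x $ 1 = 0 \<and> (c * l - l) * x $ 2 = 0"
      using indep2[OF ev1 ev2 nz] by blast
    moreover have "c^2 * l - l \<noteq> 0" "c * l - l \<noteq> 0" using c2 c Av(3) by auto
    ultimately have x12: "x $ 1 = 0" "x $ 2 = 0" by auto
    then have "x $ 3 = 0" using y Av(2) by simp
    then show "x = 0" using x12 by (simp add: vec_eq_iff forall_3)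
  qed
  have "invertible (matrix_inv Q)" "matrix_inv Q ** A ** matrix_inv (matrix_inv Q) = mat l ** diag_omega (c^2)"
    using inv_conj[OF Qinv AQ] by auto
  moreover have "matrix_inv Q ** B ** matrix_inv (matrix_inv Q) = mat s ** cyc_perm"
    using inv_conj[OF Qinv BQ] by auto
  moreover have "(c^2)^3 = 1" "c^2 \<noteq> 1"
  proof -
    have "(c^2)^3 = (c^3)^2" by (simp flip: power_mult add: mult.commute)
    then show "(c^2)^3 = 1" using c by simp
  qed (use c2 in auto)
  ultimately show ?thesis using Av(3) s0 unfolding proj_eq_iff by blast
qed



lemma three_zero: "(x::3) + x + x = 0"
  using exhaust_3[of x] by auto

lemma three_mul: "3 * (x::3) = 0"
proof -
  have "(3::3) = 0" by simp
  then show ?thesis by (metis mult_zero_left)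
qed

lemma mat_cancel: "(c::complex) \<noteq> 0 \<Longrightarrow> mat (1/c) ** (mat c ** X) = (X::complex^'n^'n)"
proof -
  assume "c \<noteq> 0"
  have "mat (1/c) ** (mat c ** X) = (mat (1/c) ** mat c) ** X" by (simp only: matrix_mul_assoc)
  also have "\<dots> = X" using \<open>c \<noteq> 0\<close> by (simp add: mat_mat)
  finally show ?thesis .
qed

lemma rho_cube:
  assumes P: "pgl_action \<rho>"
  shows "\<exists>\<alpha>. \<alpha> \<noteq> 0 \<and> \<rho> g ** \<rho> g ** \<rho> g = mat \<alpha>"
proof -
  obtain z0 where z0: "z0 \<noteq> 0" "\<rho> 0 = mat z0"
    using P unfolding pgl_action_def proj_eq_iff by auto
  obtain k1 where k1: "k1 \<noteq> 0" "\<rho> (g + g) = mat k1 ** (\<rho> g ** \<rho> g)"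
    using P unfolding pgl_action_def proj_eq_iff by blast
  obtain k2 where k2: "k2 \<noteq> 0" "\<rho> (g + g + g) = mat k2 ** (\<rho> (g + g) ** \<rho> g)"
    using P unfolding pgl_action_def proj_eq_iff by blast
  have "g + g + g = 0" by (simp add: vec_eq_iff three_mul)
  then have "mat z0 = mat (k2 * k1) ** (\<rho> g ** \<rho> g ** \<rho> g)"
    using z0 k1 k2 by (simp add: matrix_mul_assoc mat_mat)
  then have "mat (1 / (k2 * k1)) ** mat z0 = \<rho> g ** \<rho> g ** \<rho> g"
    using k1 k2 by (simp add: mat_cancel)
  then have "\<rho> g ** \<rho> g ** \<rho> g = mat (z0 / (k2 * k1))" by (simp add: mat_mat)
  then show ?thesis using z0 k1 k2 by (intro exI[of _ "z0 / (k2 * k1)"]) simp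
qed

lemma cube_vec: "M ** M ** M = mat \<alpha> \<Longrightarrow> M *v (M *v (M *v x)) = \<alpha> *s (x::complex^3)"
  by (metis mat_vec matrix_vector_mul_assoc)

lemma det_mat3: "det (mat c :: complex^3^3) = c^3"
  by (simp add: det_diagonal mat_def)

theorem lemma5p5:
  fixes \<rho> :: "3^2 \<Rightarrow> complex^3^3"
  assumes "pgl_action \<rho>"
    and "finite (nonfree_points \<rho>)"
  shows "\<exists>g1 g2 :: 3^2. {a *s g1 + b *s g2 | a b :: 3. True} = UNIV \<and>
           (\<exists>P :: complex^3^3. invertible P \<and>
              (\<exists>\<omega>::complex. \<omega> ^ 3 = 1 \<and> \<omega> \<noteq> 1 \<and>
                 proj_eq (P ** \<rho> g1 ** matrix_inv P) (diag_omega \<omega>) \<and>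
                 proj_eq (P ** \<rho> g2 ** matrix_inv P) cyc_perm))"
proof -
  note P = assms(1) and fin = assms(2)
  have inv: "invertible (\<rho> g)" for g using P unfolding pgl_action_def by blast
  have mult: "\<exists>k. k \<noteq> 0 \<and> \<rho> (g + h) = mat k ** (\<rho> g ** \<rho> h)" for g h
    using P unfolding pgl_action_def proj_eq_iff by blast
  define g1 :: "3^2" where "g1 = (\<chi> i. if i = 1 then 1 else 0)"
  define g2 :: "3^2" where "g2 = (\<chi> i. if i = 2 then 1 else 0)"
  have span: "{a *s g1 + b *s g2 | a b :: 3. True} = UNIV"
  proof -
    have "x = x $ 1 *s g1 + x $ 2 *s g2" for x
      unfolding g1_def g2_def vec_eq_iff using exhaust_2 by (auto)
    then show ?thesis by blast
  qed
  have g1nz: "g1 \<noteq> 0" and g2nz: "g2 \<noteq> 0" and g12nz: "g1 + g2 \<noteq> 0" and g122nz: "g1 + (g2 + g2) \<noteq> 0"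
    unfolding g1_def g2_def by (auto simp: vec_eq_iff dest: spec[of _ 1])
  define A where "A = \<rho> g1"
  define B where "B = \<rho> g2"
  obtain \<alpha> where \<alpha>: "\<alpha> \<noteq> 0" "A ** A ** A = mat \<alpha>" using rho_cube[OF P] unfolding A_def by blast
  obtain \<beta> where \<beta>: "\<beta> \<noteq> 0" "B ** B ** B = mat \<beta>" using rho_cube[OF P] unfolding B_def by blast
  obtain k where k: "k \<noteq> 0" "\<rho> (g1 + g2) = mat k ** (A ** B)" using mult unfolding A_def B_def by blast
  obtain k' where k': "k' \<noteq> 0" "\<rho> (g2 + g1) = mat k' ** (B ** A)" using mult unfolding A_def B_def by blast
  define c where "c = k' / k"
  have c0: "c \<noteq> 0" using k k' by (simp add: c_def)
  have ABm: "A ** B = mat c ** (B ** A)"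
  proof -
    have "mat k ** (A ** B) = mat k' ** (B ** A)" using k k' by (simp add: add.commute)
    then have "mat (1/k) ** (mat k ** (A ** B)) = mat (1/k) ** (mat k' ** (B ** A))" by simp
    then have "(mat (1/k) ** mat k) ** (A ** B) = (mat (1/k) ** mat k') ** (B ** A)"
      by (simp only: matrix_mul_assoc)
    then show ?thesis using k by (simp add: mat_mat c_def)
  qed
  have AB: "A *v (B *v x) = c *s (B *v (A *v x))" for x
    using arg_cong[OF ABm, of "\<lambda>N. N *v x"] by (simp add: matrix_vector_mul_assoc[symmetric] mat_mul_vec mat_vec)
  have c3: "c^3 = 1"
  proof -
    have "det (A ** B) = c^3 * det (B ** A)" using ABm by (simp add: det_mul det_mat3)
    moreover have "det (A ** B) = det (B ** A)" by (simp add: det_mul)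
    moreover have "det (A ** B) \<noteq> 0" using inv invertible_det_nz invertible_mult unfolding A_def B_def by blast
    ultimately show ?thesis by simp
  qed
  have A3: "A *v (A *v (A *v x)) = \<alpha> *s x" for x using cube_vec[OF \<alpha>(2)] .
  have B3: "B *v (B *v (B *v x)) = \<beta> *s x" for x using cube_vec[OF \<beta>(2)] .
  have notscal: "\<not> (\<exists>l. A = mat l)"
  proof
    assume "\<exists>l. A = mat l"
    then obtain l where l: "A = mat l" by blast
    define u :: "complex^3" where "u = (\<chi> i. if i = 1 then 1 else 0)"
    define w :: "complex^3" where "w = (\<chi> i. if i = 2 then 1 else 0)"
    have "\<forall>a b. a *s u + b *s w = 0 \<longrightarrow> a = 0 \<and> b = 0"
      unfolding u_def w_def vec_eq_iff by (auto dest: spec[of _ 1] spec[of _ 2])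
    then show False using infinite_nonfree[of g1 \<rho> u l w] g1nz fin l
      unfolding A_def by (auto simp: mat_vec)
  qed
  then obtain v0 v1 l0 l1 where ev: "v0 \<noteq> 0" "v1 \<noteq> 0" "l0 \<noteq> l1" "A *v v0 = l0 *s v0" "A *v v1 = l1 *s v1"
    using eig2[OF \<alpha>(2,1)] by blast
  have l0: "l0 \<noteq> 0" "l0^3 = \<alpha>"
  proof -
    have "A *v (A *v (A *v v0)) = l0^3 *s v0" using ev by (simp add: vec.scale power3_eq_cube)
    then show "l0^3 = \<alpha>" using A3[of v0] ev(1) by (metis vec.scale_cancel_right)
    then show "l0 \<noteq> 0" using \<alpha> by auto
  qed
  show ?thesis
  proof (cases "c = 1")
    case False
    from construct[OF AB c3 False B3 \<beta>(1) inv[of g2, folded B_def] ev(4) ev(1) l0(1)]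
    show ?thesis using span unfolding A_def B_def by blast
  next
    case True
    have ABc: "A *v (B *v x) = B *v (A *v x)" for x using AB[of x] True by simp
    have "\<exists>b. B *v v0 = b *s v0"
      using oned[OF fin g1nz, of v0 l0 "B *v v0"] ev ABc[of v0] unfolding A_def by (simp add: vec.scale)
    then obtain b0 where b0: "B *v v0 = b0 *s v0" by blast
    have "\<exists>b. B *v v1 = b *s v1"
      using oned[OF fin g1nz, of v1 l1 "B *v v1"] ev ABc[of v1] unfolding A_def by (simp add: vec.scale)
    then obtain b1 where b1: "B *v v1 = b1 *s v1" by blast
    have ind: "\<forall>a b. a *s v0 + b *s v1 = 0 \<longrightarrow> a = 0 \<and> b = 0"
      using indep2[OF ev(4) ev(5) ev(1) ev(2) ev(3)] .
    have b03: "b0^3 = \<beta>"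
    proof -
      have "B *v (B *v (B *v v0)) = b0^3 *s v0" using b0 by (simp add: vec.scale power3_eq_cube)
      then show ?thesis using B3[of v0] ev(1) by (metis vec.scale_cancel_right)
    qed
    have b13: "b1^3 = \<beta>"
    proof -
      have "B *v (B *v (B *v v1)) = b1^3 *s v1" using b1 by (simp add: vec.scale power3_eq_cube)
      then show ?thesis using B3[of v1] ev(2) by (metis vec.scale_cancel_right)
    qed
    have l13: "l1^3 = \<alpha>"
    proof -
      have "A *v (A *v (A *v v1)) = l1^3 *s v1" using ev by (simp add: vec.scale power3_eq_cube)
      then show ?thesis using A3[of v1] ev(2) by (metis vec.scale_cancel_right)
    qed
    have bb0: "b0 \<noteq> 0" using b03 \<beta> by auto
    define r where "r = l1 / l0"
    define t where "t = b1 / b0"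
    have l1r: "l1 = r * l0" and b1t: "b1 = t * b0" using l0 bb0 by (simp_all add: r_def t_def)
    have r3: "r^3 = 1" using l0 l13 \<alpha>(1) by (simp add: r_def power_divide)
    have t3: "t^3 = 1" using bb0 b03 b13 \<beta>(1) by (simp add: t_def power_divide)
    have r1: "r \<noteq> 1" using ev(3) l1r by auto
    have rr: "1 + r + r^2 = 0"
    proof -
      have "(r - 1) * (1 + r + r^2) = 0" using r3 by (simp add: algebra_simps power2_eq_square power3_eq_cube)
      then show ?thesis using r1 by simp
    qed
    have "(t - 1) * (t - r) * (t - r^2) = 0"
    proof -
      have "(t - 1) * (t - r) * (t - r^2) = t^3 - (1 + r + r^2) * t^2 + r * (1 + r + r^2) * t - r^3"
        by (simp add: algebra_simps power2_eq_square power3_eq_cube)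
      then show ?thesis using rr r3 t3 by simp
    qed
    then have "t = 1 \<or> t = r \<or> t = r^2" by auto
    moreover have False if "t = 1"
    proof -
      have "\<rho> g2 *v v1 = b0 *s v1" using b1 b1t that unfolding B_def by simp
      then show False using infinite_nonfree[of g2 \<rho> v0 b0 v1] g2nz b0 ind fin unfolding B_def by blast
    qed
    moreover have False if tr: "t = r"
    proof -
      obtain m1 where m1: "\<rho> (g1 + (g2 + g2)) = mat m1 ** (A ** \<rho> (g2 + g2))" using mult unfolding A_def by blast
      obtain m2 where m2: "\<rho> (g2 + g2) = mat m2 ** (B ** B)" using mult unfolding B_def by blast
      have e0: "\<rho> (g1 + (g2 + g2)) *v v0 = (m1 * m2 * l0 * b0^2) *s v0"
        unfolding m1 m2 using ev b0
        by (simp add: mat_mul_vec mat_vec matrix_vector_mul_assoc[symmetric] vec.scale power2_eq_square mult_ac)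
      have "\<rho> (g1 + (g2 + g2)) *v v1 = (m1 * m2 * l1 * b1^2) *s v1"
        unfolding m1 m2 using ev b1
        by (simp add: mat_mul_vec mat_vec matrix_vector_mul_assoc[symmetric] vec.scale power2_eq_square mult_ac)
      moreover have "l1 * b1^2 = l0 * b0^2" unfolding l1r b1t tr using r3
        by (simp add: power2_eq_square power3_eq_cube mult_ac)
      ultimately have e1: "\<rho> (g1 + (g2 + g2)) *v v1 = (m1 * m2 * l0 * b0^2) *s v1" by (simp add: mult.assoc)
      show False using infinite_nonfree[of "g1 + (g2 + g2)" \<rho> v0 _ v1, OF g122nz e0 e1 ind] fin by blast
    qed
    moreover have False if tr: "t = r^2"
    proof -
      have e0: "\<rho> (g1 + g2) *v v0 = (k * l0 * b0) *s v0"
        unfolding k using ev b0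
        by (simp add: mat_mul_vec mat_vec matrix_vector_mul_assoc[symmetric] vec.scale mult_ac)
      have "\<rho> (g1 + g2) *v v1 = (k * l1 * b1) *s v1"
        unfolding k using ev b1
        by (simp add: mat_mul_vec mat_vec matrix_vector_mul_assoc[symmetric] vec.scale mult_ac)
      moreover have "l1 * b1 = l0 * b0" unfolding l1r b1t tr using r3
        by (simp add: power2_eq_square power3_eq_cube mult_ac)
      ultimately have e1: "\<rho> (g1 + g2) *v v1 = (k * l0 * b0) *s v1" by (simp add: mult.assoc)
      show False using infinite_nonfree[of "g1 + g2" \<rho> v0 _ v1, OF g12nz e0 e1 ind] fin by blast
    qed
    ultimately show ?thesis by blast
  qed
qed

end
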